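(* Let $G$ be a connected graph of order $n$, and let $g$ be a non-negative integer with $0\leq g\leq \min\left\{\Delta(G),\left\lfloor \frac{n-3}{2}\right\rfloor\right\}$, such that $G$ has a $g$-good-neighbor cut. Then $$\kappa(G)\leq \kappa^g(G)\leq n-2g-2.$$ Moreover, the upper and lower bounds are sharp (each is attained with equality by some such graph and $g$).
   Context: For a connected graph $G=(V,E)$ and integer $g\ge0$: a set $F\subseteq V$ is a $g$-good-neighbor faulty set if $|N(v)\cap (V-F)|\geq g$ for every $v\in V-F$; a $g$-good-neighbor cut is such an $F$ with $G-F$ disconnected; $\kappa^g(G)$ is the minimum cardinality of a $g$-good-neighbor cut. $\kappa(G)$ is the usual vertex connectivity, $\Delta(G)$ the maximum degree. *)

theory Defs
  imports Main
begin

definition simple_graph :: "'a set \<Rightarrow> ('a \<Rightarrow> 'a \<Rightarrow> bool) \<Rightarrow> bool" where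
  "simple_graph V E \<longleftrightarrow> finite V \<and> (\<forall>u v. E u v \<longrightarrow> u \<in> V \<and> v \<in> V)
     \<and> (\<forall>u v. E u v \<longrightarrow> E v u) \<and> (\<forall>v. \<not> E v v)"

definition reach_in :: "('a \<Rightarrow> 'a \<Rightarrow> bool) \<Rightarrow> 'a set \<Rightarrow> 'a \<Rightarrow> 'a \<Rightarrow> bool" where
  "reach_in E U u v \<longleftrightarrow> u \<in> U \<and> v \<in> U \<and> (\<lambda>x y. E x y \<and> x \<in> U \<and> y \<in> U)\<^sup>*\<^sup>* u v"

definition connected_on :: "('a \<Rightarrow> 'a \<Rightarrow> bool) \<Rightarrow> 'a set \<Rightarrow> bool" where
  "connected_on E U \<longleftrightarrow> U \<noteq> {} \<and> (\<forall>u\<in>U. \<forall>v\<in>U. reach_in E U u v)"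

definition disconnected_on :: "('a \<Rightarrow> 'a \<Rightarrow> bool) \<Rightarrow> 'a set \<Rightarrow> bool" where
  "disconnected_on E U \<longleftrightarrow> (\<exists>u\<in>U. \<exists>v\<in>U. \<not> reach_in E U u v)"

definition nbhd :: "'a set \<Rightarrow> ('a \<Rightarrow> 'a \<Rightarrow> bool) \<Rightarrow> 'a \<Rightarrow> 'a set" where
  "nbhd V E v = {u \<in> V. E v u}"

definition max_degree :: "'a set \<Rightarrow> ('a \<Rightarrow> 'a \<Rightarrow> bool) \<Rightarrow> nat" where
  "max_degree V E = Max ((\<lambda>v. card (nbhd V E v)) ` V)"

text \<open>Vertex connectivity: minimum size of S \<subseteq> V such that G - S is disconnected
  or has at most one vertex (so \<kappa>(K_n) = n - 1).\<close>
definition vertex_connectivity :: "'a set \<Rightarrow> ('a \<Rightarrow> 'a \<Rightarrow> bool) \<Rightarrow> nat" where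
  "vertex_connectivity V E =
     Min {card S | S. S \<subseteq> V \<and> (disconnected_on E (V - S) \<or> card (V - S) \<le> 1)}"

definition good_neighbor_faulty :: "'a set \<Rightarrow> ('a \<Rightarrow> 'a \<Rightarrow> bool) \<Rightarrow> nat \<Rightarrow> 'a set \<Rightarrow> bool" where
  "good_neighbor_faulty V E g F \<longleftrightarrow> F \<subseteq> V \<and>
     (\<forall>v \<in> V - F. card (nbhd V E v \<inter> (V - F)) \<ge> g)"

definition good_neighbor_cut :: "'a set \<Rightarrow> ('a \<Rightarrow> 'a \<Rightarrow> bool) \<Rightarrow> nat \<Rightarrow> 'a set \<Rightarrow> bool" where
  "good_neighbor_cut V E g F \<longleftrightarrow> good_neighbor_faulty V E g F \<and> disconnected_on E (V - F)"

definition good_neighbor_connectivity :: "'a set \<Rightarrow> ('a \<Rightarrow> 'a \<Rightarrow> bool) \<Rightarrow> nat \<Rightarrow> nat" where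
  "good_neighbor_connectivity V E g = Min {card F | F. good_neighbor_cut V E g F}"

definition prop21_hyps :: "'a set \<Rightarrow> ('a \<Rightarrow> 'a \<Rightarrow> bool) \<Rightarrow> nat \<Rightarrow> bool" where
  "prop21_hyps V E g \<longleftrightarrow> simple_graph V E \<and> connected_on E V \<and>
     g \<le> max_degree V E \<and> int g \<le> (int (card V) - 3) div 2 \<and>
     (\<exists>F. good_neighbor_cut V E g F)"

end

theory Submission
  imports Defs
begin

lemma cut_bound:
  assumes sg: "simple_graph V E" and cut: "good_neighbor_cut V E g F"
  shows "card F + 2*g + 2 \<le> card V"
proof -
  let ?U = "V - F"
  have finV: "finite V" and sym: "\<And>u v. E u v \<Longrightarrow> E v u" and irr: "\<And>v. \<not> E v v"
    using sg unfolding simple_graph_def by auto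
  have FV: "F \<subseteq> V" and deg: "\<And>v. v \<in> ?U \<Longrightarrow> card (nbhd V E v \<inter> ?U) \<ge> g"
    using cut unfolding good_neighbor_cut_def good_neighbor_faulty_def by auto
  obtain u v where u: "u \<in> ?U" and v: "v \<in> ?U" and nr: "\<not> reach_in E ?U u v"
    using cut unfolding good_neighbor_cut_def disconnected_on_def by auto
  define A where "A = insert u (nbhd V E u \<inter> ?U)"
  define B where "B = insert v (nbhd V E v \<inter> ?U)"
  have finU: "finite ?U" using finV by auto
  have AU: "A \<subseteq> ?U" using u unfolding A_def nbhd_def by auto
  have BU: "B \<subseteq> ?U" using v unfolding B_def nbhd_def by auto
  have cA: "card A \<ge> g + 1"
  proof -
    have "u \<notin> nbhd V E u \<inter> ?U" using irr unfolding nbhd_def by auto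
    moreover have "finite (nbhd V E u \<inter> ?U)" using finU by auto
    ultimately have "card A = card (nbhd V E u \<inter> ?U) + 1" unfolding A_def by simp
    thus ?thesis using deg[OF u] by simp
  qed
  have cB: "card B \<ge> g + 1"
  proof -
    have "v \<notin> nbhd V E v \<inter> ?U" using irr unfolding nbhd_def by auto
    moreover have "finite (nbhd V E v \<inter> ?U)" using finU by auto
    ultimately have "card B = card (nbhd V E v \<inter> ?U) + 1" unfolding B_def by simp
    thus ?thesis using deg[OF v] by simp
  qed
  let ?R = "\<lambda>x y. E x y \<and> x \<in> ?U \<and> y \<in> ?U"
  have disj: "A \<inter> B = {}"
  proof (rule ccontr)
    assume "A \<inter> B \<noteq> {}"
    then obtain w where wA: "w \<in> A" and wB: "w \<in> B" by auto
    have "?R\<^sup>*\<^sup>* u v"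
    proof -
      have "?R\<^sup>*\<^sup>* u w" using wA u unfolding A_def nbhd_def by auto
      moreover have "?R\<^sup>*\<^sup>* w v" using wB v sym unfolding B_def nbhd_def by auto
      ultimately show ?thesis by (rule rtranclp_trans)
    qed
    thus False using nr u v unfolding reach_in_def by auto
  qed
  have "card A + card B = card (A \<union> B)"
    using disj finU AU BU by (metis card_Un_disjoint finite_subset)
  also have "\<dots> \<le> card ?U" using AU BU finU by (intro card_mono) auto
  also have "\<dots> = card V - card F" using FV finV by (simp add: card_Diff_subset finite_subset)
  finally have "card A + card B \<le> card V - card F" .
  moreover have "card F \<le> card V" using FV finV by (simp add: card_mono)
  ultimately show ?thesis using cA cB by linarith
qed

lemma general:
  assumes h: "prop21_hyps V E g"
  shows "vertex_connectivity V E \<le> good_neighbor_connectivity V E g \<and>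
         int (good_neighbor_connectivity V E g) \<le> int (card V) - 2 * int g - 2"
proof -
  have sg: "simple_graph V E" and ex: "\<exists>F. good_neighbor_cut V E g F"
    using h unfolding prop21_hyps_def by auto
  have finV: "finite V" using sg unfolding simple_graph_def by auto
  let ?C = "{card F | F. good_neighbor_cut V E g F}"
  have sub: "\<And>F. good_neighbor_cut V E g F \<Longrightarrow> F \<subseteq> V"
    unfolding good_neighbor_cut_def good_neighbor_faulty_def by auto
  have "?C \<subseteq> card ` Pow V" using sub by blast
  hence finC: "finite ?C" using finV by (meson finite_Pow_iff finite_imageI finite_subset)
  have neC: "?C \<noteq> {}" using ex by auto
  have "Min ?C \<in> ?C" using finC neC by (rule Min_in)
  then obtain F where F: "good_neighbor_cut V E g F" and cF: "card F = good_neighbor_connectivity V E g"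
    unfolding good_neighbor_connectivity_def by auto
  have b: "card F + 2*g + 2 \<le> card V" using cut_bound[OF sg F] .
  let ?S = "{card S | S. S \<subseteq> V \<and> (disconnected_on E (V - S) \<or> card (V - S) \<le> 1)}"
  have "?S \<subseteq> card ` Pow V" by blast
  hence finS: "finite ?S" using finV by (meson finite_Pow_iff finite_imageI finite_subset)
  have "card F \<in> ?S" using F unfolding good_neighbor_cut_def good_neighbor_faulty_def by auto
  hence "vertex_connectivity V E \<le> card F" unfolding vertex_connectivity_def using finS by (rule Min_le[rotated])
  thus ?thesis using b cF by linarith
qed

definition P3 :: "nat \<Rightarrow> nat \<Rightarrow> bool" where
  "P3 x y \<longleftrightarrow> (x=0 \<and> y=1) \<or> (x=1 \<and> y=0) \<or> (x=1 \<and> y=2) \<or> (x=2 \<and> y=1)"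

lemma P3_hyps: "prop21_hyps {0,1,2} P3 0"
proof -
  have sg: "simple_graph {0,1,2} P3" unfolding simple_graph_def P3_def by auto
  let ?R = "\<lambda>x y. P3 x y \<and> x \<in> {0::nat,1,2} \<and> y \<in> {0,1,2}"
  have r01: "?R\<^sup>*\<^sup>* 0 1" by (rule r_into_rtranclp) (simp add: P3_def)
  have r12: "?R\<^sup>*\<^sup>* 1 2" by (rule r_into_rtranclp) (simp add: P3_def)
  have r10: "?R\<^sup>*\<^sup>* 1 0" by (rule r_into_rtranclp) (simp add: P3_def)
  have r21: "?R\<^sup>*\<^sup>* 2 1" by (rule r_into_rtranclp) (simp add: P3_def)
  have r02: "?R\<^sup>*\<^sup>* 0 2" using r01 r12 by (rule rtranclp_trans)
  have r20: "?R\<^sup>*\<^sup>* 2 0" using r21 r10 by (rule rtranclp_trans)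
  have conn: "connected_on P3 {0,1,2}"
    unfolding connected_on_def reach_in_def using r01 r12 r10 r21 r02 r20 by auto
  have "\<not> (\<lambda>x y. P3 x y \<and> x \<in> {0::nat,1,2} - {1} \<and> y \<in> {0,1,2} - {1})\<^sup>*\<^sup>* 0 2"
  proof
    assume "(\<lambda>x y. P3 x y \<and> x \<in> {0::nat,1,2} - {1} \<and> y \<in> {0,1,2} - {1})\<^sup>*\<^sup>* 0 2"
    thus False by (cases rule: converse_rtranclpE) (auto simp: P3_def)
  qed
  hence "disconnected_on P3 ({0,1,2} - {1})"
    unfolding disconnected_on_def reach_in_def by (intro bexI[of _ 0] bexI[of _ 2]) auto
  hence cut: "good_neighbor_cut {0,1,2} P3 0 {1}"
    unfolding good_neighbor_cut_def good_neighbor_faulty_def by auto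
  show ?thesis unfolding prop21_hyps_def using sg conn cut by auto
qed

lemma P3_vc: "vertex_connectivity {0::nat,1,2} P3 \<ge> 1"
proof -
  let ?S = "{card S | S. S \<subseteq> {0::nat,1,2} \<and> (disconnected_on P3 ({0,1,2} - S) \<or> card ({0,1,2} - S) \<le> 1)}"
  have conn: "connected_on P3 {0,1,2}" using P3_hyps unfolding prop21_hyps_def by auto
  have finS: "finite ?S"
  proof -
    have "?S \<subseteq> card ` Pow {0::nat,1,2}" by blast
    thus ?thesis by (meson finite_Pow_iff finite_imageI finite_subset finite.intros)
  qed
  have neS: "?S \<noteq> {}" by (rule ex_in_conv[THEN iffD1], rule exI[of _ 3], rule CollectI, rule exI[of _ "{0,1,2}"]) auto
  have all: "\<forall>x\<in>?S. 1 \<le> x"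
  proof
    fix x assume "x \<in> ?S"
    then obtain S where S: "S \<subseteq> {0::nat,1,2}" "disconnected_on P3 ({0,1,2} - S) \<or> card ({0,1,2} - S) \<le> 1"
      and x: "x = card S" by auto
    show "1 \<le> x"
    proof (rule ccontr)
      assume "\<not> 1 \<le> x"
      hence "S = {}" using x S(1) by (metis card_0_eq finite.intros finite_insert finite_subset less_one not_le)
      thus False using S(2) conn unfolding connected_on_def disconnected_on_def by auto
    qed
  qed
  show ?thesis unfolding vertex_connectivity_def using finS neS all by simp
qed

theorem proposition2p1:
  shows "(\<forall>(V :: 'a set) E g. prop21_hyps V E g \<longrightarrow>
            vertex_connectivity V E \<le> good_neighbor_connectivity V E g \<and>
            int (good_neighbor_connectivity V E g) \<le> int (card V) - 2 * int g - 2)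
       \<and> (\<exists>(V :: nat set) E g. prop21_hyps V E g \<and>
            vertex_connectivity V E = good_neighbor_connectivity V E g)
       \<and> (\<exists>(V :: nat set) E g. prop21_hyps V E g \<and>
            int (good_neighbor_connectivity V E g) = int (card V) - 2 * int g - 2)"
proof -
  have g: "vertex_connectivity {0::nat,1,2} P3 \<le> good_neighbor_connectivity {0,1,2} P3 0 \<and>
         int (good_neighbor_connectivity {0::nat,1,2} P3 0) \<le> int (card {0::nat,1,2}) - 2 * int 0 - 2"
    by (rule general[OF P3_hyps])
  have "card {0::nat,1,2} = 3" by simp
  hence e: "vertex_connectivity {0::nat,1,2} P3 = 1" "good_neighbor_connectivity {0::nat,1,2} P3 0 = 1"
    using g P3_vc by auto
  show ?thesis
  proof (intro conjI)
    show "\<forall>(V :: 'a set) E g. prop21_hyps V E g \<longrightarrow>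
            vertex_connectivity V E \<le> good_neighbor_connectivity V E g \<and>
            int (good_neighbor_connectivity V E g) \<le> int (card V) - 2 * int g - 2"
      using general by blast
    show "\<exists>(V :: nat set) E g. prop21_hyps V E g \<and>
            vertex_connectivity V E = good_neighbor_connectivity V E g"
      using P3_hyps e by metis
    show "\<exists>(V :: nat set) E g. prop21_hyps V E g \<and>
            int (good_neighbor_connectivity V E g) = int (card V) - 2 * int g - 2"
      using P3_hyps e \<open>card {0::nat,1,2} = 3\<close> by (intro exI[of _ "{0,1,2}"] exI[of _ P3] exI[of _ 0]) simp
  qed
qed

end
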